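(* Let $K$ be an algebraically closed field of characteristic three, and let $G$ be a small finite subgroup of $\mathrm{SL}(3,K)$ of order $3^r$. Then $G\cong C_3^r$ (the direct product of $r$ copies of the cyclic group of order three).
   Context: An element $g\in G\subset\mathrm{GL}(3,K)$ is a pseudo-reflection if its fixed subspace in $K^3$ has dimension $2$; $G$ is small if it contains no pseudo-reflection. *)

theory Defs
  imports "HOL-Analysis.Analysis" "HOL-Algebra.Product_Groups" "HOL-Algebra.Elementary_Groups"
begin

definition alg_closed :: "'a::field itself \<Rightarrow> bool" where
  "alg_closed _ \<longleftrightarrow>
     (\<forall>n::nat. \<forall>c::nat \<Rightarrow> 'a. n \<ge> 1 \<longrightarrow> (\<exists>x::'a. x ^ n + (\<Sum>i<n. c i * x ^ i) = 0))"

definition SL3 :: "('a::field ^ 3 ^ 3) monoid" where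
  "SL3 = \<lparr>carrier = {A. det A = 1}, mult = (**), one = mat 1\<rparr>"

definition pseudo_reflection :: "'a::field ^ 3 ^ 3 \<Rightarrow> bool" where
  "pseudo_reflection g \<longleftrightarrow> vec.dim {v :: 'a ^ 3. g *v v = v} = 2"

definition small :: "('a::field ^ 3 ^ 3) set \<Rightarrow> bool" where
  "small G \<longleftrightarrow> (\<forall>g\<in>G. \<not> pseudo_reflection g)"

end

theory Submission
  imports Defs "HOL-Computational_Algebra.Primes" "HOL-Algebra.Group_Action" "HOL-Algebra.Multiplicative_Group"
begin

lemma SL3_simps [simp]:
  "carrier SL3 = {A. det A = 1}" "mult SL3 = (**)" "one SL3 = mat 1"
  by (simp_all add: SL3_def)

lemma group_SL3: "group (SL3 :: ('a::field ^ 3 ^ 3) monoid)"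
proof (rule groupI)
  fix x assume x: "x \<in> carrier (SL3 :: ('a::field ^ 3 ^ 3) monoid)"
  then have "det x \<noteq> 0" by simp
  then obtain y where y: "x ** y = mat 1" "y ** x = mat 1"
    using invertible_det_nz[of x] unfolding invertible_def by blast
  have "det y * det x = 1" using y det_mul[of y x] by simp
  then have "det y = 1" using x by simp
  then show "\<exists>y\<in>carrier SL3. y \<otimes>\<^bsub>SL3\<^esub> x = \<one>\<^bsub>SL3\<^esub>" using y by auto
qed (auto simp: det_mul matrix_mul_assoc)

fun mp :: "'a::field ^ 3 ^ 3 \<Rightarrow> nat \<Rightarrow> 'a ^ 3 ^ 3" where
  "mp A 0 = mat 1"
| "mp A (Suc n) = mp A n ** A"

lemma nat_pow_SL3: "x [^]\<^bsub>SL3\<lparr>carrier := G\<rparr>\<^esub> (n::nat) = mp x n"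
  by (induction n) (simp_all add: SL3_def)

lemma mp_Suc': "mp A (Suc n) = A ** mp A n"
  by (induction n) (simp_all add: matrix_mul_assoc[symmetric])

lemma mp_add: "mp A (m + n) = mp A m ** mp A n"
  by (induction n) (simp_all add: matrix_mul_assoc)

lemma mp_mult: "mp A (m * n) = mp (mp A m) n"
proof (induction n)
  case (Suc n)
  have "m * Suc n = m * n + m" by simp
  then show ?case using Suc by (simp only: mp_add mp.simps)
qed simp

lemma mp_vec_Suc: "mp A (Suc n) *v x = mp A n *v (A *v x)"
  by (simp add: matrix_vector_mul_assoc)

lemma mp_vec_Suc': "mp A (Suc n) *v x = A *v (mp A n *v x)"
  by (simp only: mp_Suc' matrix_vector_mul_assoc)

lemma triple_zero:
  assumes "(3::'a::field) = 0"
  shows "(y::'a ^ 'n) + y + y = 0"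
proof -
  have "y $ i + y $ i + y $ i = 3 * y $ i" for i by simp
  then show ?thesis using assms by (simp add: vec_eq_iff)
qed

lemma cube_shift:
  assumes "(3::'a::field) = 0"
  shows "mp (N + mat 1 :: 'a ^ 3 ^ 3) 3 = mp N 3 + mat 1"
proof -
  have "mp (N + mat 1) 3 *v x = (mp N 3 + mat 1) *v x" for x
  proof -
    have e: "mp A 3 *v x = A *v (A *v (A *v x))" for A :: "'a^3^3"
      by (simp add: numeral_3_eq_3 matrix_vector_mul_assoc matrix_mul_assoc)
    let ?a = "N *v x" and ?b = "N *v (N *v x)" and ?c = "N *v (N *v (N *v x))"
    have "mp (N + mat 1) 3 *v x = ?c + (?b + ?b + ?b) + (?a + ?a + ?a) + x"
      unfolding e by (simp only: matrix_vector_mult_add_rdistrib matrix_vector_right_distrib matrix_vector_mul_lid add_ac)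
    also have "\<dots> = ?c + x" by (simp only: triple_zero[OF assms] add_0_right)
    finally show ?thesis by (simp add: e matrix_vector_mult_add_rdistrib)
  qed
  then show ?thesis by (simp add: matrix_eq)
qed

lemma pow3_shift:
  assumes "(3::'a::field) = 0"
  shows "mp (N + mat 1 :: 'a ^ 3 ^ 3) (3 ^ k) = mp N (3 ^ k) + mat 1"
proof (induction k)
  case 0 then show ?case by (simp add: numeral_3_eq_3)
next
  case (Suc k)
  have e: "(3::nat) ^ Suc k = 3 ^ k * 3" by simp
  have "mp (N + mat 1) (3 ^ Suc k) = mp (mp (N + mat 1) (3 ^ k)) 3"
    by (simp only: e mp_mult)
  also have "\<dots> = mp (mp N (3 ^ k)) 3 + mat 1" using Suc cube_shift[OF assms] by simp
  also have "\<dots> = mp N (3 ^ Suc k) + mat 1" by (simp only: e mp_mult)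
  finally show ?case .
qed


lemma mvs: "(A::'a::field^'n^'m) *v (c *s x) = c *s (A *v x)"
  by (simp add: vec_eq_iff matrix_vector_mult_def sum_distrib_left algebra_simps)


lemma dimension3: "vec.dim (UNIV :: ('a::field ^ 3) set) = 3"
  by (simp add: card_cart_basis)

lemma kernel_subspace: "vec.subspace {x. (A::'a::field^'n^'m) *v x = 0}"
  unfolding vec.subspace_def by (auto simp: matrix_vector_right_distrib mvs)

lemma dim_full3:
  assumes "vec.subspace (S :: ('a::field ^ 3) set)" "vec.dim S \<ge> 3"
  shows "S = UNIV"
proof -
  have "vec.dim S \<le> vec.dim (UNIV :: ('a ^ 3) set)" by (rule vec.dim_subset) simp
  moreover have d: "vec.dim (UNIV :: ('a ^ 3) set) = 3" by (rule dimension3)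
  ultimately have "vec.dim S = vec.dim (UNIV :: ('a ^ 3) set)" using assms(2) by linarith
  then have "vec.span S = UNIV" using vec.dim_eq_full vec.dimension_def by (metis vec.dim_UNIV)
  then show ?thesis using assms(1) by (metis vec.span_eq_iff)
qed

lemma nil3:
  assumes "mp (N::'a::field^3^3) m = 0"
  shows "mp N 3 = 0"
proof -
  define K where "K j = {x. mp N j *v x = 0}" for j
  have sub: "vec.subspace (K j)" for j unfolding K_def by (rule kernel_subspace)
  have mono1: "K j \<subseteq> K (Suc j)" for j
    unfolding K_def by (auto simp del: mp.simps simp add: mp_vec_Suc')
  have mono: "K j \<subseteq> K (j + i)" for i j
  proof (induction i)
    case (Suc i)
    have "K (j + i) \<subseteq> K (Suc (j + i))" by (rule mono1)
    then show ?case using Suc.IH by simp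
  qed simp
  have stab1: "K (Suc j) = K (Suc (Suc j))" if "K j = K (Suc j)" for j
  proof
    show "K (Suc j) \<subseteq> K (Suc (Suc j))" by (rule mono1)
    show "K (Suc (Suc j)) \<subseteq> K (Suc j)"
    proof
      fix x assume "x \<in> K (Suc (Suc j))"
      then have "N *v x \<in> K (Suc j)" unfolding K_def by (simp only: mp_vec_Suc mem_Collect_eq)
      then have "N *v x \<in> K j" using that by blast
      then show "x \<in> K (Suc j)" unfolding K_def by (simp only: mp_vec_Suc mem_Collect_eq)
    qed
  qed
  have step: "K (j + i) = K (Suc (j + i))" if "K j = K (Suc j)" for i j
  proof (induction i)
    case 0 show ?case using that by simp
  next
    case (Suc i) then show ?case using stab1[of "j + i"] by simp
  qed
  have stab: "K j = K (j + i)" if "K j = K (Suc j)" for i j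
  proof (induction i)
    case (Suc i) then show ?case using step[OF that, of i] by simp
  qed simp
  have KU: "K m = UNIV" unfolding K_def using assms by simp
  have full: "K j = UNIV" if "K j = K (Suc j)" for j
  proof -
    have "K m \<subseteq> K (j + m)" using mono[of m j] by (simp add: add.commute)
    then show ?thesis using stab[OF that, of m] KU by auto
  qed
  have strict: "vec.dim (K j) < vec.dim (K (Suc j))" if "K j \<noteq> K (Suc j)" for j
  proof -
    have e1: "vec.span (K j) = K j" using sub[of j] by (simp only: vec.span_eq_iff)
    have e2: "vec.span (K (Suc j)) = K (Suc j)" using sub[of "Suc j"] by (simp only: vec.span_eq_iff)
    have "K j \<subset> K (Suc j)" using mono1[of j] that by blast
    then have "vec.span (K j) \<subset> vec.span (K (Suc j))" by (simp only: e1 e2)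
    then show ?thesis by (rule vec.dim_psubset)
  qed
  have "K 3 = UNIV"
  proof (cases "K 0 = K 1 \<or> K 1 = K 2 \<or> K 2 = K 3")
    case True
    then show ?thesis
    proof (elim disjE)
      assume "K 0 = K 1" then have "K 0 = UNIV" using full[of 0] by simp
      then show ?thesis using mono[of 0 3] by auto
    next
      assume "K 1 = K 2" then have "K 1 = UNIV" using full[of 1] by (simp add: numeral_2_eq_2)
      moreover have "K 1 \<subseteq> K 3" using mono[of 1 2] by (simp add: numeral_3_eq_3)
      ultimately show ?thesis by auto
    next
      assume "K 2 = K 3" then show ?thesis using full[of 2] by (simp add: numeral_3_eq_3 numeral_2_eq_2)
    qed
  next
    case False
    then have "vec.dim (K 0) < vec.dim (K 1)" "vec.dim (K 1) < vec.dim (K 2)" "vec.dim (K 2) < vec.dim (K 3)"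
      using strict[of 0] strict[of 1] strict[of 2] by (simp_all add: numeral_3_eq_3 numeral_2_eq_2)
    then have "vec.dim (K 3) \<ge> 3" by linarith
    then show ?thesis using dim_full3 sub by blast
  qed
  then have "\<forall>x. mp N 3 *v x = 0 *v x" unfolding K_def by auto
  then show ?thesis by (simp only: matrix_eq[symmetric])
qed


lemma exists_nonkernel:
  assumes "(N::'a::field^'n^'m) \<noteq> 0"
  shows "\<exists>w. N *v w \<noteq> 0"
  using assms by (metis matrix_eq matrix_vector_mult_0)

lemma rank1_dim2:
  assumes "(N::'a::field^3^3) \<noteq> 0" "N ** N = 0"
  shows "vec.dim {x. N *v x = 0} = 2"
proof -
  define Kr where "Kr = {x. N *v x = 0}"
  have sub: "vec.subspace Kr" unfolding Kr_def by (rule kernel_subspace)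
  obtain w where w: "N *v w \<noteq> 0" using exists_nonkernel[OF assms(1)] by blast
  define u where "u = N *v w"
  have uK: "u \<in> Kr" unfolding Kr_def u_def using assms(2) by (simp add: matrix_vector_mul_assoc)
  have wK: "w \<notin> Kr" unfolding Kr_def using w by simp
  have u0: "u \<noteq> 0" using w u_def by simp
  have le2: "vec.dim Kr \<le> 2"
  proof (rule ccontr)
    assume "\<not> ?thesis"
    then have "Kr = UNIV" using dim_full3[OF sub] by simp
    then show False using wK by simp
  qed
  have ge2: "vec.dim Kr \<ge> 2"
  proof (rule ccontr)
    assume small1: "\<not> ?thesis"
    have KS: "Kr \<subseteq> vec.span {u}"
    proof
      fix v assume v: "v \<in> Kr"
      show "v \<in> vec.span {u}"
      proof (rule ccontr)
        assume nv: "v \<notin> vec.span {u}"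
        have ind: "vec.independent (insert v {u})"
          using vec.independent_insertI[OF nv] u0 by simp
        have "v \<noteq> u" using nv vec.span_base[of u "{u}"] by auto
        then have "card (insert v {u}) = 2" by simp
        moreover have "card (insert v {u}) \<le> vec.dim Kr"
          using vec.independent_card_le_dim[OF _ ind] v uK by simp
        ultimately show False using small1 by simp
      qed
    qed
    have "vec.dim {u, w} \<le> card {u, w}" by (rule vec.dim_le_card') simp
    also have "\<dots> \<le> 2" by (simp add: card_insert_le_m1)
    finally have "vec.span {u, w} \<noteq> UNIV"
      using dimension3 vec.dim_span by (metis numeral_le_iff semiring_norm(72) semiring_norm(69) num.simps(8) order.trans le_numeral_extra(4) Suc_n_not_le_n numeral_3_eq_3 numeral_2_eq_2)
    then obtain x where x: "x \<notin> vec.span {u, w}" by blast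
    have "N *v x \<in> Kr" unfolding Kr_def using assms(2) by (simp add: matrix_vector_mul_assoc)
    then obtain k where k: "N *v x = k *s u" using KS vec.span_singleton by blast
    have "x - k *s w \<in> Kr" unfolding Kr_def
      by (simp add: matrix_vector_mult_diff_distrib mvs k u_def)
    then have "x - k *s w \<in> vec.span {u, w}"
      using KS vec.span_mono[of "{u}" "{u,w}"] by auto
    moreover have "k *s w \<in> vec.span {u, w}" by (simp add: vec.span_base vec.span_scale)
    ultimately have "(x - k *s w) + k *s w \<in> vec.span {u, w}" by (rule vec.span_add)
    then show False using x by simp
  qed
  show ?thesis using le2 ge2 unfolding Kr_def by simp
qed



lemma centralizer_poly:
  assumes N3: "\<And>y. N *v (N *v (N *v y)) = 0" and v: "N *v (N *v v) \<noteq> 0"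
    and comm: "(M::'a::field^3^3) ** N = N ** M"
  shows "\<exists>a b c. \<forall>x. M *v x = a *s x + b *s (N *v x) + c *s (N *v (N *v x))"
proof -
  define v1 where "v1 = N *v v"
  define v2 where "v2 = N *v v1"
  have v2: "v2 \<noteq> 0" using v by (simp add: v1_def v2_def)
  have Nv2: "N *v v2 = 0" using N3 by (simp add: v1_def v2_def)
  have i1: "v1 \<notin> vec.span {v2}"
  proof
    assume "v1 \<in> vec.span {v2}"
    then obtain k where "v1 = k *s v2" using vec.span_singleton by blast
    then have "N *v v1 = k *s (N *v v2)" by (simp add: mvs)
    then have "v2 = k *s (N *v v2)" using v2_def by metis
    then show False using Nv2 v2 by simp
  qed
  have i0: "v \<notin> vec.span {v1, v2}"
  proof
    assume "v \<in> vec.span {v1, v2}"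
    moreover have "vec.span {v1, v2} \<subseteq> {x. (N ** N) *v x = 0}"
    proof (rule vec.span_minimal)
      have k1: "(N ** N) *v v1 = 0" using Nv2 unfolding v2_def by (simp add: matrix_vector_mul_assoc[symmetric])
      have k2: "(N ** N) *v v2 = 0" using Nv2 by (simp add: matrix_vector_mul_assoc[symmetric])
      show "{v1, v2} \<subseteq> {x. (N ** N) *v x = 0}" using k1 k2 by blast
      show "vec.subspace {x. (N ** N) *v x = 0}" by (rule kernel_subspace)
    qed
    ultimately have "(N ** N) *v v = 0" by auto
    then show False using v by (simp add: matrix_vector_mul_assoc[symmetric])
  qed
  have ind: "vec.independent {v, v1, v2}"
    using vec.independent_insertI[OF i0] vec.independent_insertI[OF i1] v2 by simp
  have "v1 \<noteq> v2" using i1 vec.span_base[of v2 "{v2}"] by auto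
  moreover have "v \<noteq> v1" "v \<noteq> v2" using i0 vec.span_base[of _ "{v1, v2}"] by auto
  ultimately have card3: "card {v, v1, v2} = 3" by simp
  have spanU: "vec.span {v, v1, v2} = UNIV"
    using vec.card_eq_dim[of "{v, v1, v2}" UNIV] ind card3 dimension3 by auto
  obtain a where a: "M *v v - a *s v \<in> vec.span {v1, v2}"
    using spanU vec.span_insert[of v "{v1, v2}"] by blast
  obtain b where b: "(M *v v - a *s v) - b *s v1 \<in> vec.span {v2}"
    using a vec.span_insert[of v1 "{v2}"] by blast
  obtain c where c: "(M *v v - a *s v) - b *s v1 = c *s v2"
    using b vec.span_singleton by blast
  define S where "S = {x. M *v x = a *s x + b *s (N *v x) + c *s (N *v (N *v x))}"
  have vS: "v \<in> S" unfolding S_def using c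
    by (simp add: v1_def v2_def algebra_simps)
  have NS: "N *v x \<in> S" if "x \<in> S" for x
  proof -
    have "M *v (N *v x) = N *v (M *v x)" by (simp add: matrix_vector_mul_assoc comm)
    also have "\<dots> = N *v (a *s x + b *s (N *v x) + c *s (N *v (N *v x)))"
      using that unfolding S_def by simp
    also have "\<dots> = a *s (N *v x) + b *s (N *v (N *v x)) + c *s (N *v (N *v (N *v x)))"
      by (simp add: matrix_vector_right_distrib mvs)
    finally show ?thesis unfolding S_def by simp
  qed
  have subS: "vec.subspace S"
    unfolding vec.subspace_def S_def
    by (auto simp: matrix_vector_right_distrib mvs algebra_simps vec.scale_left_commute)
  have "{v, v1, v2} \<subseteq> S" using vS NS v1_def v2_def by auto
  then have "vec.span {v, v1, v2} \<subseteq> S" using subS by (rule vec.span_minimal)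
  then have "S = UNIV" using spanU by auto
  then show ?thesis unfolding S_def by blast
qed

lemma centralizer_comm:
  assumes N3: "\<And>y. N *v (N *v (N *v y)) = 0" and v: "N *v (N *v v) \<noteq> 0"
    and c1: "(M1::'a::field^3^3) ** N = N ** M1"
    and c2: "(M2::'a::field^3^3) ** N = N ** M2"
  shows "M1 ** M2 = M2 ** M1"
proof -
  obtain a b c where abc: "\<And>x. M2 *v x = a *s x + b *s (N *v x) + c *s (N *v (N *v x))"
    using centralizer_poly[OF N3 v c2] by blast
  have cv: "M1 *v (N *v x) = N *v (M1 *v x)" for x by (simp add: matrix_vector_mul_assoc c1)
  have "(M1 ** M2) *v x = (M2 ** M1) *v x" for x
    by (simp add: matrix_vector_mul_assoc[symmetric] abc matrix_vector_right_distrib mvs cv)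
  then show ?thesis by (simp add: matrix_eq)
qed


lemma (in group) center_3group:
  assumes fin: "finite (carrier G)" and ord: "order G = 3 ^ r" and r: "r \<ge> 1"
  shows "\<exists>z\<in>carrier G. z \<noteq> \<one> \<and> (\<forall>g\<in>carrier G. g \<otimes> z = z \<otimes> g)"
proof (rule ccontr)
  assume H: "\<not> ?thesis"
  define \<phi> where "\<phi> = (\<lambda>g. \<lambda>h\<in>carrier G. g \<otimes> h \<otimes> inv g)"
  interpret A: group_action G "carrier G" \<phi>
    unfolding \<phi>_def by (rule action_by_conjugation)
  have orb_in: "x \<in> orbit G \<phi> x" if "x \<in> carrier G" for x
  proof -
    have "x = \<phi> \<one> x" unfolding \<phi>_def using that by simp
    then show ?thesis unfolding orbit_def using one_closed by blast
  qed
  have orb_sub: "orbit G \<phi> x \<subseteq> carrier G" if "x \<in> carrier G" for x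
    unfolding orbit_def \<phi>_def using that by auto
  have orb1: "orbit G \<phi> \<one> = {\<one>}"
  proof
    show "orbit G \<phi> \<one> \<subseteq> {\<one>}" unfolding orbit_def \<phi>_def by auto
    show "{\<one>} \<subseteq> orbit G \<phi> \<one>" using orb_in[OF one_closed] by simp
  qed
  have dvd3: "3 dvd card (orbit G \<phi> x)" if x: "x \<in> carrier G" "x \<noteq> \<one>" for x
  proof -
    have "card (orbit G \<phi> x) * card (stabilizer G \<phi> x) = 3 ^ r"
      using A.orbit_stabilizer_theorem[OF x(1)] ord by simp
    then have "card (orbit G \<phi> x) dvd 3 ^ r" by (metis dvd_triv_left)
    then obtain i where i: "card (orbit G \<phi> x) = 3 ^ i"
      using divides_primepow_nat[of 3] by auto
    show ?thesis
    proof (cases i)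
      case 0
      then have c1: "card (orbit G \<phi> x) = 1" using i by simp
      have "orbit G \<phi> x = {x}"
        using c1 orb_in[OF x(1)] by (metis card_1_singletonE singletonD)
      then have "\<forall>g\<in>carrier G. g \<otimes> x = x \<otimes> g"
      proof (intro ballI)
        fix g assume g: "g \<in> carrier G"
        have "\<phi> g x \<in> orbit G \<phi> x" unfolding orbit_def using g by blast
        then have "g \<otimes> x \<otimes> inv g = x" using \<open>orbit G \<phi> x = {x}\<close> x g unfolding \<phi>_def by simp
        moreover have "g \<otimes> x = (g \<otimes> x \<otimes> inv g) \<otimes> g" using g x by (simp add: m_assoc)
        ultimately show "g \<otimes> x = x \<otimes> g" by simp
      qed
      then show ?thesis using H x by blast
    next
      case (Suc j) then show ?thesis using i by simp
    qed
  qed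
  have finO: "finite (orbits G (carrier G) \<phi>)"
  proof -
    have "orbits G (carrier G) \<phi> \<subseteq> Pow (carrier G)"
      unfolding orbits_def using orb_sub by auto
    then show ?thesis using fin by (meson finite_Pow_iff finite_subset)
  qed
  have one_O: "{\<one>} \<in> orbits G (carrier G) \<phi>"
    unfolding orbits_def using orb1 by force
  have "(\<Sum>Ob\<in>orbits G (carrier G) \<phi>. \<Sum>x\<in>Ob. (1::nat)) = (\<Sum>x\<in>carrier G. 1)"
    by (rule A.disjoint_sum[OF fin])
  then have "(\<Sum>Ob\<in>orbits G (carrier G) \<phi>. card Ob) = card (carrier G)" by simp
  also have "card (carrier G) = 3 ^ r" using ord order_def by metis
  finally have sumeq: "(\<Sum>Ob\<in>orbits G (carrier G) \<phi>. card Ob) = 3 ^ r" .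
  define S' where "S' = (\<Sum>Ob\<in>orbits G (carrier G) \<phi> - {{\<one>}}. card Ob)"
  have "(\<Sum>Ob\<in>orbits G (carrier G) \<phi>. card Ob) = card {\<one>} + S'"
    unfolding S'_def by (rule sum.remove[OF finO one_O])
  then have e: "3 ^ r = 1 + S'" using sumeq by simp
  have "3 dvd S'" unfolding S'_def
  proof (rule dvd_sum)
    fix Ob assume O: "Ob \<in> orbits G (carrier G) \<phi> - {{\<one>}}"
    then obtain x where x: "x \<in> carrier G" "Ob = orbit G \<phi> x" unfolding orbits_def by blast
    have "x \<noteq> \<one>" using O x orb1 by auto
    then show "3 dvd card Ob" using dvd3 x by simp
  qed
  moreover have "3 dvd (3::nat) ^ r" using r by (simp add: dvd_power)
  ultimately show False using e by presburger
qed


definition Z3P :: "nat \<Rightarrow> (nat \<Rightarrow> int) monoid" where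
  "Z3P n = product_group {..<n} (\<lambda>_. integer_mod_group 3)"

lemma Z3P_carrier: "carrier (Z3P n) = ({..<n} \<rightarrow>\<^sub>E {0..<3::int})"
  by (simp add: Z3P_def carrier_integer_mod_group)

lemma Z3P_mult: "x \<otimes>\<^bsub>Z3P n\<^esub> y = (\<lambda>i\<in>{..<n}. (x i + y i) mod 3)"
  by (simp add: Z3P_def)

lemma group_Z3P: "group (Z3P n)"
  unfolding Z3P_def by (rule product_group) simp

lemma card_Z3P: "card (carrier (Z3P n)) = 3 ^ n"
  by (simp add: Z3P_carrier card_PiE)

lemma sq_mod3:
  fixes a b :: int
  assumes "a \<in> {0..<3}" "b \<in> {0..<3}" "a \<noteq> b"
  shows "((a - b) * (a - b)) mod 3 = 1"
proof -
  have "a = 0 \<or> a = 1 \<or> a = 2" "b = 0 \<or> b = 1 \<or> b = 2" using assms by auto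
  then show ?thesis using assms(3) by auto
qed

context comm_group
begin

lemma pow_mod3:
  assumes y: "y \<in> carrier G" and e: "y [^] (3::nat) = \<one>"
  shows "y [^] (k::int) = y [^] (k mod 3)"
proof -
  have e': "y [^] (3::int) = \<one>" using e int_pow_int[of G y 3] by simp
  have "k = 3 * (k div 3) + k mod 3" by simp
  then have "y [^] k = y [^] (3 * (k div 3)) \<otimes> y [^] (k mod 3)"
    using int_pow_mult[OF y] by metis
  also have "y [^] (3 * (k div 3)) = \<one>"
    using int_pow_pow[OF y, of 3 "k div 3"] e' by simp
  finally show ?thesis using y by simp
qed

lemma elem3_iso:
  assumes fin: "finite (carrier G)" and card: "card (carrier G) = 3 ^ r"
    and e3: "\<And>x. x \<in> carrier G \<Longrightarrow> x [^] (3::nat) = \<one>"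
  shows "\<exists>\<phi>. \<phi> \<in> iso (Z3P r) G"
proof -
  define good where "good n \<longleftrightarrow> (\<exists>\<phi>. \<phi> \<in> hom (Z3P n) G \<and> inj_on \<phi> (carrier (Z3P n)))" for n
  have bound: "n \<le> r" if gd: "good n" for n
  proof -
    obtain \<phi> where \<phi>: "\<phi> \<in> hom (Z3P n) G" "inj_on \<phi> (carrier (Z3P n))"
      using gd unfolding good_def by blast
    have "\<phi> ` carrier (Z3P n) \<subseteq> carrier G" using \<phi>(1) by (auto simp: hom_def)
    then have "card (carrier (Z3P n)) \<le> card (carrier G)"
      using card_inj_on_le[OF \<phi>(2) _ fin] by blast
    then have "(3::nat) ^ n \<le> 3 ^ r" using card card_Z3P by simp
    then show ?thesis by simp
  qed
  have good0: "good 0"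
  proof -
    have "(\<lambda>_. \<one>) \<in> hom (Z3P 0) G" by (auto simp: hom_def)
    moreover have "inj_on (\<lambda>_. \<one>) (carrier (Z3P 0))" by (simp add: Z3P_carrier inj_on_def)
    ultimately show ?thesis unfolding good_def by blast
  qed
  have ext: "good (Suc n)" if \<phi>: "\<phi> \<in> hom (Z3P n) G" "inj_on \<phi> (carrier (Z3P n))"
    and ns: "y \<in> carrier G" "y \<notin> \<phi> ` carrier (Z3P n)" for \<phi> n y
  proof -
    interpret h: group_hom "Z3P n" G \<phi>
      using \<phi>(1) group_Z3P by (simp add: group_hom_def group_hom_axioms_def is_group)
    define \<psi> where "\<psi> f = \<phi> (restrict f {..<n}) \<otimes> y [^] (f n)" for f :: "nat \<Rightarrow> int"
    have rc: "restrict f {..<n} \<in> carrier (Z3P n)" if "f \<in> carrier (Z3P (Suc n))" for f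
      using that by (auto simp: Z3P_carrier PiE_iff)
    have fn: "f n \<in> {0..<3}" if "f \<in> carrier (Z3P (Suc n))" for f
      using that by (auto simp: Z3P_carrier PiE_iff)
    have yp: "y [^] (k::int) \<in> carrier G" for k using ns(1) by simp
    have hom: "\<psi> \<in> hom (Z3P (Suc n)) G"
    proof (rule homI)
      fix f assume "f \<in> carrier (Z3P (Suc n))"
      then show "\<psi> f \<in> carrier G" unfolding \<psi>_def using rc yp by simp
    next
      fix f g assume f: "f \<in> carrier (Z3P (Suc n))" and g: "g \<in> carrier (Z3P (Suc n))"
      have r: "restrict (f \<otimes>\<^bsub>Z3P (Suc n)\<^esub> g) {..<n} = restrict f {..<n} \<otimes>\<^bsub>Z3P n\<^esub> restrict g {..<n}"
        by (auto simp: Z3P_mult fun_eq_iff)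
      have nn: "(f \<otimes>\<^bsub>Z3P (Suc n)\<^esub> g) n = (f n + g n) mod 3" by (simp add: Z3P_mult)
      have "y [^] ((f n + g n) mod 3) = y [^] (f n) \<otimes> y [^] (g n)"
        using pow_mod3[OF ns(1) e3[OF ns(1)], of "f n + g n"] int_pow_mult[OF ns(1)] by simp
      moreover have "\<phi> (restrict f {..<n} \<otimes>\<^bsub>Z3P n\<^esub> restrict g {..<n}) = \<phi> (restrict f {..<n}) \<otimes> \<phi> (restrict g {..<n})"
        using rc f g by simp
      moreover have "\<psi> (f \<otimes>\<^bsub>Z3P (Suc n)\<^esub> g) = \<phi> (restrict f {..<n} \<otimes>\<^bsub>Z3P n\<^esub> restrict g {..<n}) \<otimes> y [^] ((f n + g n) mod 3)"
        unfolding \<psi>_def r nn ..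
      moreover have "(p \<otimes> q) \<otimes> (a \<otimes> b) = (p \<otimes> a) \<otimes> (q \<otimes> b)"
        if "p \<in> carrier G" "q \<in> carrier G" "a \<in> carrier G" "b \<in> carrier G" for p q a b
        using that by (simp add: m_ac)
      ultimately show "\<psi> (f \<otimes>\<^bsub>Z3P (Suc n)\<^esub> g) = \<psi> f \<otimes> \<psi> g"
        unfolding \<psi>_def using rc[OF f] rc[OF g] yp h.hom_closed by presburger
    qed
    have inj: "inj_on \<psi> (carrier (Z3P (Suc n)))"
    proof (rule inj_onI)
      fix f g assume f: "f \<in> carrier (Z3P (Suc n))" and g: "g \<in> carrier (Z3P (Suc n))"
        and eq: "\<psi> f = \<psi> g"
      define rf where "rf = restrict f {..<n}"
      define rg where "rg = restrict g {..<n}"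
      have rfc: "rf \<in> carrier (Z3P n)" "rg \<in> carrier (Z3P n)" using rc f g rf_def rg_def by auto
      have eq': "\<phi> rf \<otimes> y [^] (f n) = \<phi> rg \<otimes> y [^] (g n)" using eq unfolding \<psi>_def rf_def rg_def .
      have ab: "f n = g n"
      proof (rule ccontr)
        assume ne: "f n \<noteq> g n"
        define d where "d = f n - g n"
        define w where "w = inv\<^bsub>Z3P n\<^esub> rf \<otimes>\<^bsub>Z3P n\<^esub> rg"
        have wc: "w \<in> carrier (Z3P n)" unfolding w_def using rfc group.inv_closed[OF group_Z3P] monoid.m_closed[OF group.is_monoid[OF group_Z3P]] by blast
        have "y [^] d = y [^] (f n) \<otimes> inv (y [^] (g n))" unfolding d_def using int_pow_diff[OF ns(1)] by simp
        also have "y [^] (f n) = inv (\<phi> rf) \<otimes> \<phi> rg \<otimes> y [^] (g n)"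
        proof -
          have pc: "\<phi> rf \<in> carrier G" "\<phi> rg \<in> carrier G" using rfc h.hom_closed by auto
          have "y [^] (f n) = inv (\<phi> rf) \<otimes> (\<phi> rf \<otimes> y [^] (f n))"
            using pc yp by (simp add: m_assoc[symmetric])
          also have "\<dots> = inv (\<phi> rf) \<otimes> (\<phi> rg \<otimes> y [^] (g n))" using eq' by simp
          also have "\<dots> = inv (\<phi> rf) \<otimes> \<phi> rg \<otimes> y [^] (g n)" using pc yp by (simp add: m_assoc)
          finally show ?thesis .
        qed
        finally have "y [^] d = inv (\<phi> rf) \<otimes> \<phi> rg"
          using rfc yp h.hom_closed by (simp add: m_assoc)
        also have "\<dots> = \<phi> w" unfolding w_def using rfc by (simp add: h.hom_inv group.inv_closed[OF group_Z3P])
        finally have yd: "y [^] d = \<phi> w" .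
        have "y = y [^] (1::int)" using ns(1) by simp
        also have "\<dots> = y [^] (d * d)"
          using pow_mod3[OF ns(1) e3[OF ns(1)], of "d * d"] sq_mod3[OF fn[OF f] fn[OF g] ne] d_def by simp
        also have "\<dots> = (y [^] d) [^] d" using int_pow_pow[OF ns(1)] by simp
        also have "\<dots> = \<phi> (w [^]\<^bsub>Z3P n\<^esub> d)" using yd h.hom_int_pow[OF wc] by simp
        finally have "y \<in> \<phi> ` carrier (Z3P n)" using wc group.int_pow_closed[OF group_Z3P] by blast
        then show False using ns(2) by simp
      qed
      have "\<phi> rf = \<phi> rg" using eq' ab rfc yp h.hom_closed by simp
      then have "rf = rg" using \<phi>(2) rfc by (meson inj_onD)
      show "f = g"
      proof
        fix i
        show "f i = g i"
        proof (cases "i < n")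
          case True then show ?thesis using \<open>rf = rg\<close> unfolding rf_def rg_def by (metis restrict_apply' lessThan_iff)
        next
          case False
          show ?thesis
          proof (cases "i = n")
            case True then show ?thesis using ab by simp
          next
            case False
            then have "i \<notin> {..<Suc n}" using \<open>\<not> i < n\<close> by simp
            then show ?thesis using f g by (simp add: Z3P_carrier PiE_iff extensional_def)
          qed
        qed
      qed
    qed
    show ?thesis unfolding good_def using hom inj by blast
  qed
  have "\<exists>n. good n \<and> \<not> good (Suc n)"
  proof (rule ccontr)
    assume "\<not> ?thesis"
    then have "good n" for n by (induction n) (use good0 in auto)
    then show False using bound[of "Suc r"] by simp
  qed
  then obtain n where gn: "good n" and ngn: "\<not> good (Suc n)" by blast
  obtain \<phi> where \<phi>: "\<phi> \<in> hom (Z3P n) G" "inj_on \<phi> (carrier (Z3P n))" using gn unfolding good_def by blast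
  have sub: "\<phi> ` carrier (Z3P n) \<subseteq> carrier G" using \<phi>(1) by (auto simp: hom_def)
  have surj: "\<phi> ` carrier (Z3P n) = carrier G"
  proof (rule ccontr)
    assume "\<not> ?thesis"
    then obtain y where "y \<in> carrier G" "y \<notin> \<phi> ` carrier (Z3P n)" using sub by blast
    then show False using ext[OF \<phi>] ngn by blast
  qed
  have "card (carrier (Z3P n)) = card (carrier G)"
    using card_image[OF \<phi>(2)] surj by simp
  then have "(3::nat) ^ n = 3 ^ r" using card card_Z3P by simp
  then have "n = r" by simp
  then show ?thesis using \<phi> surj by (auto simp: iso_def bij_betw_def)
qed

end


theorem lemma6p2:
  fixes G :: "('a::field ^ 3 ^ 3) set" and r :: nat
  assumes "alg_closed TYPE('a)"
    and "CHAR('a) = 3"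
    and "subgroup G SL3"
    and "finite G"
    and "card G = 3 ^ r"
    and "small G"
  shows "SL3\<lparr>carrier := G\<rparr> \<cong> product_group {..<r} (\<lambda>_. integer_mod_group 3)"
proof -
  let ?H = "SL3\<lparr>carrier := G\<rparr>"
  have grp: "group ?H" by (rule group.subgroup_imp_group[OF group_SL3 assms(3)])
  have cH: "carrier ?H = G" by simp
  have mH: "x \<otimes>\<^bsub>?H\<^esub> y = x ** y" for x y by (simp add: SL3_def)
  have oneH: "\<one>\<^bsub>?H\<^esub> = mat 1" by (simp add: SL3_def)
  have ordH: "order ?H = 3 ^ r" using assms(5) by (simp add: order_def)
  have finH: "finite (carrier ?H)" using assms(4) by simp
  have "(of_nat 3 :: 'a) = 0" unfolding of_nat_eq_0_iff_char_dvd assms(2) by simp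
  then have three: "(3::'a) = 0" by simp
  have unip: "mp (g - mat 1) 3 = 0 \<and> mp g 3 = mat 1" if g: "g \<in> G" for g
  proof -
    have "g [^]\<^bsub>?H\<^esub> order ?H = \<one>\<^bsub>?H\<^esub>" using group.pow_order_eq_1[OF grp] g by simp
    then have "mp g (3 ^ r) = mat 1" using ordH oneH by (simp add: nat_pow_SL3)
    moreover have ge: "g = (g - mat 1) + mat 1" by simp
    ultimately have "mp (g - mat 1) (3 ^ r) + mat 1 = mat 1"
      using pow3_shift[OF three, of "g - mat 1" r] by simp
    then have n0: "mp (g - mat 1) (3 ^ r) = 0" by simp
    have n3: "mp (g - mat 1) 3 = 0" by (rule nil3[OF n0])
    have "mp g 3 = mp (g - mat 1) 3 + mat 1" using cube_shift[OF three, of "g - mat 1"] ge by simp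
    then show ?thesis using n3 by simp
  qed
  have comm: "g ** h = h ** g" if g: "g \<in> G" and h: "h \<in> G" for g h
  proof (cases "r = 0")
    case True
    have one: "mat 1 \<in> G" using subgroup.one_closed[OF assms(3)] by simp
    have "card G = 1" using assms(5) True by simp
    then have "G = {mat 1}" using one by (metis card_1_singletonE singletonD)
    then show ?thesis using g h by simp
  next
    case False
    then obtain z where z: "z \<in> G" "z \<noteq> mat 1" "\<And>g. g \<in> G \<Longrightarrow> g ** z = z ** g"
      using group.center_3group[OF grp finH ordH] cH mH oneH by auto
    define N where "N = z - mat 1"
    have zN: "z = N + mat 1" unfolding N_def by simp
    have N0: "N \<noteq> 0" using z(2) unfolding N_def by simp
    have "mp N 3 = 0" using unip[OF z(1)] unfolding N_def by simp
    then have N3: "N *v (N *v (N *v y)) = 0" for y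
      by (metis (no_types) matrix_vector_mul_assoc matrix_vector_mult_0 mp.simps numeral_3_eq_3 matrix_mul_lid)
    have NN: "N ** N \<noteq> 0"
    proof
      assume "N ** N = 0"
      then have d2: "vec.dim {x. N *v x = 0} = 2" using rank1_dim2 N0 by blast
      have "{v. z *v v = v} = {x. N *v x = 0}"
        unfolding zN by (auto simp: matrix_vector_mult_add_rdistrib)
      then have "pseudo_reflection z" using d2 unfolding pseudo_reflection_def by simp
      then show False using assms(6) z(1) unfolding small_def by blast
    qed
    obtain v where v: "(N ** N) *v v \<noteq> 0" using exists_nonkernel[OF NN] by blast
    then have v': "N *v (N *v v) \<noteq> 0" by (simp add: matrix_vector_mul_assoc)
    have cN: "M ** N = N ** M" if M: "M \<in> G" for M
    proof -
      have "(M ** N) *v x = (N ** M) *v x" for x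
      proof -
        have "(M ** N) *v x = M *v (z *v x) - M *v x"
          unfolding N_def by (simp add: matrix_vector_mul_assoc[symmetric] matrix_vector_mult_diff_rdistrib matrix_vector_mult_diff_distrib)
        also have "M *v (z *v x) = z *v (M *v x)" using z(3)[OF M] by (simp add: matrix_vector_mul_assoc)
        finally show ?thesis
          unfolding N_def by (simp add: matrix_vector_mul_assoc[symmetric] matrix_vector_mult_diff_rdistrib)
      qed
      then show ?thesis by (simp add: matrix_eq)
    qed
    show ?thesis by (rule centralizer_comm[OF N3 v' cN[OF g] cN[OF h]])
  qed
  have cg: "comm_group ?H"
    by (rule group.group_comm_groupI[OF grp]) (simp add: mH comm)
  have e3: "x [^]\<^bsub>?H\<^esub> (3::nat) = \<one>\<^bsub>?H\<^esub>" if "x \<in> carrier ?H" for x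
    using unip[of x] that by (simp add: nat_pow_SL3 oneH)
  obtain \<phi> where "\<phi> \<in> iso (Z3P r) ?H"
    using comm_group.elem3_iso[OF cg finH _ e3] assms(5) by auto
  then have "Z3P r \<cong> ?H" by (rule is_isoI)
  then have "?H \<cong> Z3P r" by (rule group.iso_sym[OF group_Z3P])
  then show ?thesis by (simp add: Z3P_def)
qed

end
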